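(* Let $\mathfrak g$ be a finite-dimensional simple Lie algebra which is either complex, or real of dimension greater than $3$. Then every maximal (proper) subalgebra $\mathfrak h$ of $\mathfrak g$ is a maximal Lie triple subsystem of $\mathfrak g$, i.e. there is no Lie triple subsystem $T$ with $\mathfrak h\subsetneq T\subsetneq\mathfrak g$.
   Context: A Lie algebra $\mathfrak g$ is regarded as a Lie triple system with triple product $[x,y,z]:=[[x,y],z]$. A Lie triple subsystem of $\mathfrak g$ is a vector subspace $T$ with $[[T,T],T]\subseteq T$. A maximal Lie triple subsystem is a proper Lie triple subsystem not properly contained in any other proper Lie triple subsystem. *)

theory Defs
  imports Complex_Main
begin

text \<open>A Lie algebra over a field 'k: the underlying vector space is the whole type 'v
  (with scalar multiplication scale), and br is the Lie bracket.\<close>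

definition lie_algebra :: "('k::field \<Rightarrow> 'v::ab_group_add \<Rightarrow> 'v) \<Rightarrow> ('v \<Rightarrow> 'v \<Rightarrow> 'v) \<Rightarrow> bool" where
  "lie_algebra scale br \<longleftrightarrow>
     vector_space scale \<and>
     (\<forall>x y z. br (x + y) z = br x z + br y z) \<and>
     (\<forall>x y z. br x (y + z) = br x y + br x z) \<and>
     (\<forall>a x y. br (scale a x) y = scale a (br x y)) \<and>
     (\<forall>a x y. br x (scale a y) = scale a (br x y)) \<and>
     (\<forall>x. br x x = 0) \<and>
     (\<forall>x y z. br x (br y z) + br y (br z x) + br z (br x y) = 0)"

definition finite_dim :: "('k::field \<Rightarrow> 'v::ab_group_add \<Rightarrow> 'v) \<Rightarrow> bool" where
  "finite_dim scale \<longleftrightarrow> (\<exists>B. finite B \<and> module.span scale B = UNIV)"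

definition lie_ideal :: "('k::field \<Rightarrow> 'v::ab_group_add \<Rightarrow> 'v) \<Rightarrow> ('v \<Rightarrow> 'v \<Rightarrow> 'v) \<Rightarrow> 'v set \<Rightarrow> bool" where
  "lie_ideal scale br I \<longleftrightarrow> module.subspace scale I \<and> (\<forall>x y. y \<in> I \<longrightarrow> br x y \<in> I)"

definition simple_lie_algebra :: "('k::field \<Rightarrow> 'v::ab_group_add \<Rightarrow> 'v) \<Rightarrow> ('v \<Rightarrow> 'v \<Rightarrow> 'v) \<Rightarrow> bool" where
  "simple_lie_algebra scale br \<longleftrightarrow> lie_algebra scale br \<and>
     (\<exists>x y. br x y \<noteq> 0) \<and>
     (\<forall>I. lie_ideal scale br I \<longrightarrow> I = {0} \<or> I = UNIV)"

definition lie_subalgebra :: "('k::field \<Rightarrow> 'v::ab_group_add \<Rightarrow> 'v) \<Rightarrow> ('v \<Rightarrow> 'v \<Rightarrow> 'v) \<Rightarrow> 'v set \<Rightarrow> bool" where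
  "lie_subalgebra scale br H \<longleftrightarrow> module.subspace scale H \<and> (\<forall>x\<in>H. \<forall>y\<in>H. br x y \<in> H)"

definition maximal_subalgebra :: "('k::field \<Rightarrow> 'v::ab_group_add \<Rightarrow> 'v) \<Rightarrow> ('v \<Rightarrow> 'v \<Rightarrow> 'v) \<Rightarrow> 'v set \<Rightarrow> bool" where
  "maximal_subalgebra scale br H \<longleftrightarrow> lie_subalgebra scale br H \<and> H \<noteq> UNIV \<and>
     (\<forall>K. lie_subalgebra scale br K \<and> H \<subseteq> K \<and> K \<noteq> UNIV \<longrightarrow> K = H)"

definition lie_triple_subsystem :: "('k::field \<Rightarrow> 'v::ab_group_add \<Rightarrow> 'v) \<Rightarrow> ('v \<Rightarrow> 'v \<Rightarrow> 'v) \<Rightarrow> 'v set \<Rightarrow> bool" where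
  "lie_triple_subsystem scale br T \<longleftrightarrow> module.subspace scale T \<and>
     (\<forall>x\<in>T. \<forall>y\<in>T. \<forall>z\<in>T. br (br x y) z \<in> T)"

definition maximal_lie_triple_subsystem :: "('k::field \<Rightarrow> 'v::ab_group_add \<Rightarrow> 'v) \<Rightarrow> ('v \<Rightarrow> 'v \<Rightarrow> 'v) \<Rightarrow> 'v set \<Rightarrow> bool" where
  "maximal_lie_triple_subsystem scale br T \<longleftrightarrow> lie_triple_subsystem scale br T \<and> T \<noteq> UNIV \<and>
     (\<forall>S. lie_triple_subsystem scale br S \<and> T \<subseteq> S \<and> S \<noteq> UNIV \<longrightarrow> S = T)"

end

theory Submission
  imports Defs "HOL-Computational_Algebra.Fundamental_Theorem_Algebra"
begin

locale lie_fd = finite_dimensional_vector_space scale Basis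
  for scale :: "'k::field \<Rightarrow> 'v::ab_group_add \<Rightarrow> 'v" (infixr \<open>*s\<close> 75) and Basis :: "'v set" +
  fixes br :: "'v \<Rightarrow> 'v \<Rightarrow> 'v"
  assumes br_addL: "br (x + y) z = br x z + br y z"
    and br_addR: "br x (y + z) = br x y + br x z"
    and br_scaleL: "br (a *s x) y = a *s (br x y)"
    and br_scaleR: "br x (a *s y) = a *s (br x y)"
    and br_alt: "br x x = 0"
    and jacobi: "br x (br y z) + br y (br z x) + br z (br x y) = 0"
    and nonab: "\<exists>x y. br x y \<noteq> 0"
    and simple: "\<And>I. subspace I \<Longrightarrow> (\<forall>x y. y \<in> I \<longrightarrow> br x y \<in> I) \<Longrightarrow> I = {0} \<or> I = UNIV"
begin

lemma br_0L[simp]: "br 0 y = 0"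
  using br_addL[of 0 0 y] by simp
lemma br_0R[simp]: "br x 0 = 0"
  using br_addR[of x 0 0] by simp
lemma br_anti: "br x y = - br y x"
proof -
  have "br (x+y) (x+y) = 0" by (rule br_alt)
  then have "br x x + br y x + (br x y + br y y) = 0" by (simp add: br_addL br_addR)
  then show ?thesis by (simp add: br_alt eq_neg_iff_add_eq_0 add.commute)
qed
lemma br_negL: "br (- x) y = - br x y"
  using br_addL[of x "-x" y] by (simp add: eq_neg_iff_add_eq_0 add.commute)
lemma br_negR: "br x (- y) = - br x y"
  using br_addR[of x y "-y"] by (simp add: eq_neg_iff_add_eq_0 add.commute)
lemma br_diffL: "br (x - y) z = br x z - br y z"
  using br_addL[of x "-y" z] by (simp add: br_negL)
lemma br_diffR: "br x (y - z) = br x y - br x z"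
  using br_addR[of x y "-z"] by (simp add: br_negR)
lemma br_deriv: "br x (br y z) = br (br x y) z + br y (br x z)"
proof -
  have a: "br y (br z x) = - br y (br x z)" by (metis br_anti br_negR)
  have b: "br z (br x y) = - br (br x y) z" by (rule br_anti)
  have "br x (br y z) + - br y (br x z) + - br (br x y) z = 0"
    using jacobi[of x y z] unfolding a b .
  then have "br x (br y z) - (br (br x y) z + br y (br x z)) = 0"
    by (simp add: algebra_simps)
  then show ?thesis by simp
qed

lemma br_span:
  assumes "a \<in> span A" "b \<in> span B" "subspace U" "\<And>a b. a \<in> A \<Longrightarrow> b \<in> B \<Longrightarrow> br a b \<in> U"
  shows "br a b \<in> U"
proof -
  have 1: "br a' b \<in> U" if "a' \<in> A" for a'
  proof -
    have "b \<in> {b. br a' b \<in> U}"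
    proof (rule span_subspace_induct[OF assms(2)])
      show "subspace {b. br a' b \<in> U}" using assms(3)
        by (simp add: subspace_def br_addR br_scaleR)
      show "x \<in> {b. br a' b \<in> U}" if "x \<in> B" for x using assms(4) that \<open>a' \<in> A\<close> by simp
    qed
    then show ?thesis by simp
  qed
  have "a \<in> {a. br a b \<in> U}"
  proof (rule span_subspace_induct[OF assms(1)])
    show "subspace {a. br a b \<in> U}" using assms(3)
      by (simp add: subspace_def br_addL br_scaleL)
    show "x \<in> {a. br a b \<in> U}" if "x \<in> A" for x using 1 that by simp
  qed
  then show ?thesis by simp
qed

definition "derived = span {br x y | x y. True}"

lemma derived_UNIV: "derived = UNIV"
proof -
  have "subspace derived" by (simp add: derived_def)
  moreover have "\<forall>x y. y \<in> derived \<longrightarrow> br x y \<in> derived"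
    unfolding derived_def by (auto intro: span_base)
  ultimately have "derived = {0} \<or> derived = UNIV" by (rule simple)
  moreover have "derived \<noteq> {0}"
  proof
    assume "derived = {0}"
    obtain x y where "br x y \<noteq> 0" using nonab by blast
    moreover have "br x y \<in> derived" unfolding derived_def by (rule span_base) blast
    ultimately show False using \<open>derived = {0}\<close> by simp
  qed
  ultimately show ?thesis by blast
qed

definition "subalg S \<longleftrightarrow> subspace S \<and> (\<forall>x\<in>S. \<forall>y\<in>S. br x y \<in> S)"
definition "maxsub h \<longleftrightarrow> subalg h \<and> h \<noteq> UNIV \<and> (\<forall>K. subalg K \<and> h \<subseteq> K \<and> K \<noteq> UNIV \<longrightarrow> K = h)"
definition "lts T \<longleftrightarrow> subspace T \<and> (\<forall>x\<in>T. \<forall>y\<in>T. \<forall>z\<in>T. br (br x y) z \<in> T)"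

lemma maxsubD:
  assumes "maxsub h" "subalg K" "h \<subseteq> K" "K \<noteq> h" shows "K = UNIV"
  using assms unfolding maxsub_def by blast

lemma lts_abelian:
  assumes mh: "maxsub h" and T: "lts T" "h \<subseteq> T" "T \<noteq> UNIV" "T \<noteq> h"
    and x: "x \<in> h" and y: "y \<in> h"
  shows "br x y = 0"
proof -
  define G where "G = {br a b | a b. a \<in> T \<and> b \<in> T}"
  define K where "K = span G"
  have sT: "subspace T" using T unfolding lts_def by blast
  have spT: "span T = T" using sT by simp
  have KT: "br k t \<in> T" if "k \<in> K" "t \<in> T" for k t
  proof (rule br_span[of k G t T T])
    show "k \<in> span G" using that K_def by simp
    show "t \<in> span T" using that span_base by blast
    show "subspace T" by (rule sT)
    show "br a b \<in> T" if "a \<in> G" "b \<in> T" for a b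
      using that T unfolding G_def lts_def by blast
  qed
  have TK: "br t k \<in> T" if "k \<in> K" "t \<in> T" for k t
    using KT[OF that] br_anti[of t k] sT subspace_neg by fastforce
  have GK: "br a b \<in> K" if "a \<in> T" "b \<in> T" for a b
    unfolding K_def G_def by (rule span_base) (use that in blast)
  have KK: "br k k' \<in> K" if "k \<in> K" "k' \<in> K" for k k'
  proof (rule br_span[of k G k' G K])
    show "k \<in> span G" "k' \<in> span G" using that K_def by simp_all
    show "subspace K" unfolding K_def by simp
    show "br a b \<in> K" if "a \<in> G" "b \<in> G" for a b
    proof -
      obtain a1 a2 where a: "a = br a1 a2" "a1 \<in> T" "a2 \<in> T" using \<open>a \<in> G\<close> G_def by blast
      obtain b1 b2 where b: "b = br b1 b2" "b1 \<in> T" "b2 \<in> T" using \<open>b \<in> G\<close> G_def by blast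
      have aK: "a \<in> K" using a GK by simp
      have "br a b = br (br a b1) b2 + br b1 (br a b2)" unfolding b by (rule br_deriv)
      moreover have "br (br a b1) b2 \<in> K" using GK KT[OF aK b(2)] b(3) by simp
      moreover have "br b1 (br a b2) \<in> K" using GK KT[OF aK b(3)] b(2) by simp
      ultimately show ?thesis unfolding K_def by (simp add: span_add)
    qed
  qed
  define S where "S = {k + t | k t. k \<in> K \<and> t \<in> T}"
  have sK: "subspace K" unfolding K_def by simp
  have "subalg S"
    unfolding subalg_def
  proof
    show "subspace S" unfolding S_def by (rule subspace_sums[OF sK sT])
    show "\<forall>x\<in>S. \<forall>y\<in>S. br x y \<in> S"
    proof (intro ballI)
      fix x y assume "x \<in> S" "y \<in> S"
      then obtain k t k' t' where xy: "x = k + t" "y = k' + t'" "k \<in> K" "t \<in> T" "k' \<in> K" "t' \<in> T"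
        unfolding S_def by blast
      have "br x y = (br k k' + br t t') + (br k t' + br t k')"
        unfolding xy by (simp add: br_addL br_addR algebra_simps)
      moreover have "br k k' + br t t' \<in> K" using KK GK xy sK subspace_add by blast
      moreover have "br k t' + br t k' \<in> T" using KT TK xy sT subspace_add by blast
      ultimately show "br x y \<in> S" unfolding S_def by blast
    qed
  qed
  moreover have "h \<subseteq> S" using T(2) subspace_0[OF sK] unfolding S_def by force
  moreover have "T \<subseteq> S" using subspace_0[OF sK] unfolding S_def by force
  ultimately have SU: "S = UNIV" using mh T(2,4) unfolding maxsub_def by blast
  define A where "A = K \<inter> T"
  have "A = {0} \<or> A = UNIV"
  proof (rule simple)
    show "subspace A" unfolding A_def by (rule subspace_inter[OF sK sT])
    show "\<forall>x y. y \<in> A \<longrightarrow> br x y \<in> A"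
    proof (intro allI impI)
      fix x a assume "a \<in> A"
      obtain k t where xk: "x = k + t" "k \<in> K" "t \<in> T" using SU unfolding S_def by blast
      have "br x a = br k a + br t a" unfolding xk by (simp add: br_addL)
      moreover have "br k a \<in> A" using KK KT \<open>a \<in> A\<close> xk unfolding A_def by blast
      moreover have "br t a \<in> A" using GK TK \<open>a \<in> A\<close> xk unfolding A_def by blast
      ultimately show "br x a \<in> A" using subspace_add subspace_inter[OF sK sT] unfolding A_def by metis
    qed
  qed
  moreover have "A \<noteq> UNIV" using T(3) unfolding A_def by blast
  moreover have "br x y \<in> A"
  proof -
    have "br x y \<in> h" using mh x y unfolding maxsub_def subalg_def by blast
    then show ?thesis using GK x y T(2) unfolding A_def by blast
  qed
  ultimately have "A = {0}" "br x y \<in> A" by blast+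
  then show ?thesis by simp
qed

lemma line_lemma:
  assumes mh: "maxsub h" and ab: "\<And>a b. a \<in> h \<Longrightarrow> b \<in> h \<Longrightarrow> br a b = 0"
    and y: "y \<notin> h" and hy: "\<And>x. x \<in> h \<Longrightarrow> br x y \<in> span (insert y h)"
  shows False
proof -
  have sh: "subspace h" using mh unfolding maxsub_def subalg_def by blast
  define S where "S = span (insert y h)"
  have "subalg S" unfolding subalg_def
  proof
    show "subspace S" unfolding S_def by simp
    show "\<forall>a\<in>S. \<forall>b\<in>S. br a b \<in> S"
    proof (intro ballI)
      fix a b assume "a \<in> S" "b \<in> S"
      show "br a b \<in> S"
      proof (rule br_span[of a "insert y h" b "insert y h" S])
        show "a \<in> span (insert y h)" "b \<in> span (insert y h)" using \<open>a \<in> S\<close> \<open>b \<in> S\<close> S_def by auto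
        show "subspace S" unfolding S_def by simp
        fix a b assume "a \<in> insert y h" "b \<in> insert y h"
        then show "br a b \<in> S"
          using ab hy br_anti[of y b] span_neg[of "br b y" "insert y h"] br_alt span_zero
          unfolding S_def by (auto simp: span_zero)
      qed
    qed
  qed
  moreover have "h \<subseteq> S" unfolding S_def by (meson span_superset subset_insertI2 subset_refl order_trans)
  moreover have "S \<noteq> h"
  proof
    assume "S = h"
    moreover have "y \<in> S" unfolding S_def by (simp add: span_base)
    ultimately show False using y by simp
  qed
  ultimately have SU: "S = UNIV" using maxsubD[OF mh] by blast
  obtain B where B: "B \<subseteq> h" "independent B" "h \<subseteq> span B" "card B = dim h"
    using basis_exists by blast
  have fB: "finite B" using B(2) finiteI_independent by blast
  define P where "P = span ((\<lambda>x. br x y) ` B)"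
  have SB: "S = span (insert y B)"
  proof -
    have "span (insert y B) \<subseteq> S" unfolding S_def using B(1) by (intro span_mono) blast
    moreover have "S \<subseteq> span (insert y B)"
    proof -
      have "insert y h \<subseteq> span (insert y B)"
        using B(3) span_mono[of B "insert y B"] span_base[of y "insert y B"] by blast
      then show ?thesis unfolding S_def by (simp add: span_minimal)
    qed
    ultimately show ?thesis by blast
  qed
  have "br a b \<in> P" for a b
  proof (rule br_span[of a "insert y B" b "insert y B" P])
    show "a \<in> span (insert y B)" "b \<in> span (insert y B)" using SU SB by auto
    show "subspace P" unfolding P_def by simp
    fix a b assume a: "a \<in> insert y B" and b: "b \<in> insert y B"
    have 1: "br c y \<in> span ((\<lambda>x. br x y) ` B)" if "c \<in> B" for c using that by (intro span_base) blast
    have 2: "br y c \<in> P" if "c \<in> B" for c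
      using span_neg[OF 1[OF that]] br_anti[of y c] unfolding P_def by simp
    have 1: "br c y \<in> P" if "c \<in> B" for c using 1[OF that] unfolding P_def .
    have 3: "br c d \<in> P" if "c \<in> B" "d \<in> B" for c d
    proof -
      have "br c d = 0" using ab that B(1) by blast
      then show ?thesis unfolding P_def by (simp add: span_zero)
    qed
    show "br a b \<in> P"
    proof (cases "a = y")
      case True then show ?thesis using b 2 br_alt[of y] span_zero[of "(\<lambda>x. br x y) ` B"]
        unfolding P_def by auto
    next
      case False then have "a \<in> B" using a by simp
      then show ?thesis using b 1 3 by auto
    qed
  qed
  then have "derived \<subseteq> P" unfolding derived_def P_def by (intro span_minimal) auto
  then have "dim (UNIV::'v set) \<le> card ((\<lambda>x. br x y) ` B)"
    using derived_UNIV fB by (intro dim_le_card) (auto simp: P_def)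
  also have "\<dots> \<le> card B" using fB by (rule card_image_le)
  finally have 1: "dim (UNIV::'v set) \<le> dim h" using B(4) by simp
  have "dim (UNIV::'v set) = dim (insert y h)" using SU unfolding S_def by (metis dim_span)
  also have "\<dots> = dim h + 1"
  proof -
    have "span h = h" using sh by simp
    have "y \<notin> span h" using y \<open>span h = h\<close> by blast
    then show ?thesis by (simp add: dim_insert)
  qed
  finally show False using 1 by simp
qed

end

context lie_fd begin

lemma plane_lemma:
  assumes mh: "maxsub h" and ab: "\<And>a b. a \<in> h \<Longrightarrow> b \<in> h \<Longrightarrow> br a b = 0"
    and w1: "w1 \<notin> h" and hw: "\<And>x. x \<in> h \<Longrightarrow> br x w1 \<in> span {w1, w2} \<and> br x w2 \<in> span {w1, w2}"
  shows "dim (UNIV::'v set) \<le> 3"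
proof -
  have sh: "subspace h" using mh unfolding maxsub_def subalg_def by blast
  define z where "z = br w1 w2"
  have hw': "br x w \<in> span {w1, w2}" if "x \<in> h" "w \<in> {w1, w2}" for x w
  proof -
    have "w = w1 \<or> w = w2" using that(2) by simp
    then show ?thesis using hw[OF that(1)] by (elim disjE) simp_all
  qed
  have hw'': "br w x \<in> span {w1, w2}" if "x \<in> h" "w \<in> {w1, w2}" for x w
  proof -
    have "br w x = - br x w" by (rule br_anti)
    then show ?thesis using span_neg[OF hw'[OF that]] by simp
  qed
  have sp2: "\<exists>a b. v = a *s w1 + b *s w2" if "v \<in> span {w1, w2}" for v
  proof -
    have "v \<in> span (insert w1 {w2})" using that by simp
    then obtain k where "v - k *s w1 \<in> span {w2}" unfolding span_breakdown_eq ..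
    then obtain l where eq: "v - k *s w1 = l *s w2" unfolding span_singleton by (metis rangeE)
    have "v = k *s w1 + l *s w2" unfolding eq[symmetric] by simp
    then show ?thesis by blast
  qed
  have zh: "z \<in> h"
  proof (rule ccontr)
    assume zn: "z \<notin> h"
    show False
    proof (rule line_lemma[OF mh ab zn])
      fix x assume xh: "x \<in> h"
      obtain a b where ab1: "br x w1 = a *s w1 + b *s w2" using sp2 hw'[OF xh, of w1] by blast
      obtain c d where cd: "br x w2 = c *s w1 + d *s w2" using sp2 hw'[OF xh, of w2] by blast
      have "br x z = br (br x w1) w2 + br w1 (br x w2)" unfolding z_def by (rule br_deriv)
      also have "\<dots> = a *s z + d *s z"
      proof -
        have "br (br x w1) w2 = a *s z" unfolding ab1 z_def by (simp add: br_addL br_scaleL br_alt)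
        moreover have "br w1 (br x w2) = d *s z" unfolding cd z_def by (simp add: br_addR br_scaleR br_alt)
        ultimately show ?thesis by simp
      qed
      also have "\<dots> = (a + d) *s z" by (simp add: scale_left_distrib)
      finally show "br x z \<in> span (insert z h)" by (simp add: span_base span_scale)
    qed
  qed
  define G where "G = insert w1 (insert w2 h)"
  have w12S: "span {w1, w2} \<subseteq> span G" unfolding G_def by (intro span_mono) blast
  have hS: "h \<subseteq> span G" unfolding G_def using span_superset[of "insert w1 (insert w2 h)"] by blast
  have gen: "br a b \<in> U" if U: "subspace U" "span {w1, w2} \<subseteq> U" "z \<in> U" and "a \<in> G" "b \<in> G" for a b U
  proof -
    have a: "a = w1 \<or> a = w2 \<or> a \<in> h" and b: "b = w1 \<or> b = w2 \<or> b \<in> h" using that unfolding G_def by auto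
    have zU: "br w1 w2 \<in> U" using U z_def by simp
    have zU': "br w2 w1 \<in> U" using subspace_neg[OF U(1) zU] br_anti[of w2 w1] by simp
    have 0: "0 \<in> U" using subspace_0[OF U(1)] .
    have hU: "br x w \<in> U" "br w x \<in> U" if "x \<in> h" "w \<in> {w1,w2}" for x w
      using hw'[OF that] hw''[OF that] U(2) by auto
    have w1: "w1 \<in> {w1,w2}" and w2: "w2 \<in> {w1,w2}" by simp_all
    show ?thesis
      using a b
    proof (elim disjE)
      assume "a = w1" "b = w1" then show ?thesis using 0 br_alt by simp
    next
      assume "a = w1" "b = w2" then show ?thesis using zU by simp
    next
      assume "a = w1" "b \<in> h" then show ?thesis using hU(2)[OF _ w1] by simp
    next
      assume "a = w2" "b = w1" then show ?thesis using zU' by simp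
    next
      assume "a = w2" "b = w2" then show ?thesis using 0 br_alt by simp
    next
      assume "a = w2" "b \<in> h" then show ?thesis using hU(2)[OF _ w2] by simp
    next
      assume "a \<in> h" "b = w1" then show ?thesis using hU(1)[OF _ w1] by simp
    next
      assume "a \<in> h" "b = w2" then show ?thesis using hU(1)[OF _ w2] by simp
    next
      assume "a \<in> h" "b \<in> h" then show ?thesis using 0 ab by simp
    qed
  qed
  have "subalg (span G)" unfolding subalg_def
  proof (intro conjI ballI)
    show "subspace (span G)" by simp
    fix a b assume "a \<in> span G" "b \<in> span G"
    then show "br a b \<in> span G"
    proof (rule br_span[of _ G _ G "span G"])
      show "subspace (span G)" by simp
      have zG: "z \<in> span G" using zh hS by blast
      fix a b assume "a \<in> G" "b \<in> G"
      then show "br a b \<in> span G" using gen[OF _ w12S zG] by simp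
    qed
  qed
  moreover have "span G \<noteq> h"
  proof
    assume "span G = h"
    moreover have "w1 \<in> span G" unfolding G_def by (simp add: span_base)
    ultimately show False using w1 by simp
  qed
  ultimately have SU: "span G = UNIV" using maxsubD[OF mh] hS by blast
  define Q where "Q = span {w1, w2, z}"
  have "br a b \<in> Q" for a b
  proof (rule br_span[of a G b G Q])
    show "a \<in> span G" "b \<in> span G" using SU by auto
    show "subspace Q" unfolding Q_def by simp
    have w12Q: "span {w1, w2} \<subseteq> Q" unfolding Q_def by (intro span_mono) blast
    have zQ: "z \<in> Q" unfolding Q_def by (simp add: span_base)
    fix a b assume "a \<in> G" "b \<in> G"
    then show "br a b \<in> Q" using gen[OF _ w12Q zQ] unfolding Q_def by simp
  qed
  then have "derived \<subseteq> Q" unfolding derived_def Q_def by (intro span_minimal) auto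
  then have "dim (UNIV::'v set) \<le> card {w1, w2, z}"
    using derived_UNIV by (intro dim_le_card) (auto simp: Q_def)
  also have "\<dots> \<le> 3" by (simp add: card_insert_le_m1)
  finally show ?thesis .
qed

end

definition lmap :: "('k::field \<Rightarrow> 'v::ab_group_add \<Rightarrow> 'v) \<Rightarrow> ('v \<Rightarrow> 'v) \<Rightarrow> bool" where
  "lmap sc f \<longleftrightarrow> (\<forall>x y. f (x + y) = f x + f y) \<and> (\<forall>c x. f (sc c x) = sc c (f x))"

definition pev :: "('k::field \<Rightarrow> 'v::ab_group_add \<Rightarrow> 'v) \<Rightarrow> 'k poly \<Rightarrow> ('v \<Rightarrow> 'v) \<Rightarrow> 'v \<Rightarrow> 'v" where
  "pev sc p f = fold_coeffs (\<lambda>a g v. sc a v + f (g v)) p (\<lambda>v. 0)"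

context vector_space begin

lemma lmap_add: "lmap scale f \<Longrightarrow> f (x + y) = f x + f y" unfolding lmap_def by blast
lemma lmap_scale: "lmap scale f \<Longrightarrow> f (c *s x) = c *s f x" unfolding lmap_def by blast
lemma lmap_0: "lmap scale f \<Longrightarrow> f 0 = 0" using lmap_scale[of f 0 0] by simp
lemma lmap_neg: "lmap scale f \<Longrightarrow> f (- x) = - f x" using lmap_scale[of f "-1" x] by simp
lemma lmap_diff: "lmap scale f \<Longrightarrow> f (x - y) = f x - f y"
  using lmap_add[of f x "-y"] lmap_neg[of f y] by simp
lemma lmap_sum: "lmap scale f \<Longrightarrow> f (sum g A) = (\<Sum>a\<in>A. f (g a))"
  by (induction A rule: infinite_finite_induct) (simp_all add: lmap_0 lmap_add)


lemma pev_0[simp]: "pev scale 0 f v = 0" by (simp add: pev_def)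

lemma pev_pCons: "lmap scale f \<Longrightarrow> pev scale (pCons a p) f v = a *s v + f (pev scale p f v)"
  by (cases "p = 0 \<and> a = 0") (auto simp add: pev_def lmap_0)

lemma pev_add_v: "lmap scale f \<Longrightarrow> pev scale p f (x + y) = pev scale p f x + pev scale p f y"
  by (induction p) (simp_all add: pev_pCons lmap_add scale_right_distrib algebra_simps)

lemma pev_scale_v: "lmap scale f \<Longrightarrow> pev scale p f (c *s x) = c *s pev scale p f x"
  by (induction p) (simp_all add: pev_pCons lmap_add lmap_scale scale_right_distrib scale_left_commute)

lemma pev_lin: "lmap scale f \<Longrightarrow> lmap scale (pev scale p f)"
  using pev_add_v[of f p] pev_scale_v[of f p] unfolding lmap_def[of scale "pev scale p f"] by blast

lemma pev_add: "lmap scale f \<Longrightarrow> pev scale (p + q) f v = pev scale p f v + pev scale q f v"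
proof (induction p arbitrary: q)
  case (pCons a p)
  then show ?case by (cases q) (simp add: pev_pCons lmap_add scale_left_distrib algebra_simps)
qed simp

lemma pev_smult: "lmap scale f \<Longrightarrow> pev scale (smult c p) f v = c *s pev scale p f v"
  by (induction p) (simp_all add: pev_pCons lmap_scale scale_right_distrib)

lemma pev_mult: "lmap scale f \<Longrightarrow> pev scale (p * q) f v = pev scale p f (pev scale q f v)"
  by (induction p) (simp_all add: pev_pCons pev_add pev_smult)

lemma pev_const: "lmap scale f \<Longrightarrow> pev scale [:c:] f v = c *s v"
  by (simp add: pev_pCons lmap_0)

lemma pev_lin1: "lmap scale f \<Longrightarrow> pev scale [:c, 1:] f v = c *s v + f v"
  by (simp add: pev_pCons lmap_0)

lemma pev_lin2: "lmap scale f \<Longrightarrow> pev scale [:c, a, 1:] f v = c *s v + f (a *s v + f v)"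
  by (simp add: pev_pCons lmap_0)

lemma pev_monom: "lmap scale f \<Longrightarrow> pev scale (monom a n) f v = a *s (f ^^ n) v"
  by (induction n) (simp_all add: monom_0 monom_Suc pev_const pev_pCons lmap_scale lmap_0)

lemma pev_sum: "lmap scale f \<Longrightarrow> pev scale (sum g A) f v = (\<Sum>a\<in>A. pev scale (g a) f v)"
  by (induction A rule: infinite_finite_induct) (simp_all add: pev_add)

lemma pev_diff: "lmap scale f \<Longrightarrow> pev scale (p - q) f v = pev scale p f v - pev scale q f v"
  using pev_add[of f p "-q" v] pev_smult[of f "-1" q v] by (simp add: minus_poly_def)

lemma pev_commute:
  assumes "lmap scale f" "lmap scale g" "\<And>x. g (f x) = f (g x)"
  shows "g (pev scale p f v) = pev scale p f (g v)"
  using assms by (induction p) (simp_all add: pev_pCons lmap_add lmap_scale lmap_0)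

lemma pev_subspace:
  assumes "lmap scale f" "subspace V" "\<And>x. x \<in> V \<Longrightarrow> f x \<in> V" "v \<in> V"
  shows "pev scale p f v \<in> V"
  using assms by (induction p) (simp_all add: pev_pCons subspace_add subspace_scale subspace_0)

end

context finite_dimensional_vector_space begin

lemma span_orbit_rep:
  assumes sh: "subspace h"
  shows "x \<in> span (h \<union> (\<lambda>i. (f ^^ i) v) ` {..<k}) \<Longrightarrow> \<exists>c. x - (\<Sum>i<k. c i *s (f ^^ i) v) \<in> h"
proof (induction k arbitrary: x)
  case 0
  have "x \<in> span h" using 0 by simp
  then have "x \<in> h" using sh by (metis span_eq_iff)
  then show ?case by simp
next
  case (Suc k)
  have eq: "h \<union> (\<lambda>i. (f^^i) v) ` {..<Suc k} = insert ((f^^k) v) (h \<union> (\<lambda>i. (f^^i) v) ` {..<k})"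
    by (auto simp: lessThan_Suc)
  obtain a where "x - a *s (f^^k) v \<in> span (h \<union> (\<lambda>i. (f^^i) v) ` {..<k})"
    using Suc.prems unfolding eq span_breakdown_eq by blast
  then obtain c where c: "x - a *s (f^^k) v - (\<Sum>i<k. c i *s (f ^^ i) v) \<in> h" using Suc.IH by blast
  define c' where "c' = c(k := a)"
  have "(\<Sum>i<Suc k. c' i *s (f^^i) v) = (\<Sum>i<k. c' i *s (f^^i) v) + a *s (f^^k) v"
    by (simp add: c'_def)
  also have "(\<Sum>i<k. c' i *s (f^^i) v) = (\<Sum>i<k. c i *s (f^^i) v)"
    by (rule sum.cong) (auto simp: c'_def)
  finally have "x - (\<Sum>i<Suc k. c' i *s (f^^i) v) = x - a *s (f^^k) v - (\<Sum>i<k. c i *s (f ^^ i) v)"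
    by (simp add: algebra_simps)
  then have "x - (\<Sum>i<Suc k. c' i *s (f^^i) v) \<in> h" using c by (simp only:)
  then show ?case by blast
qed

lemma orbit_poly:
  assumes sh: "subspace h" and f: "lmap scale f" and v: "v \<notin> h"
  shows "\<exists>p. p \<noteq> 0 \<and> pev scale p f v \<in> h"
proof -
  define U where "U k = h \<union> (\<lambda>i. (f ^^ i) v) ` {..<k}" for k
  have "\<exists>k. (f ^^ k) v \<in> span (U k)"
  proof (rule ccontr)
    assume na: "\<nexists>k. (f ^^ k) v \<in> span (U k)"
    have "dim (U k) \<ge> dim h + k" for k
    proof (induction k)
      case 0 then show ?case by (simp add: U_def)
    next
      case (Suc k)
      have "U (Suc k) = insert ((f^^k) v) (U k)" by (auto simp: U_def lessThan_Suc)
      then have "dim (U (Suc k)) = dim (U k) + 1" using na by (simp add: dim_insert)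
      then show ?case using Suc.IH by simp
    qed
    then have "dim (U (Suc dimension)) \<ge> dim h + Suc dimension" by blast
    then have "dim (U (Suc dimension)) \<ge> Suc dimension" by linarith
    with dim_subset_UNIV[of "U (Suc dimension)"] show False by simp
  qed
  then obtain k where k: "(f ^^ k) v \<in> span (U k)" by blast
  obtain c where c: "(f^^k) v - (\<Sum>i<k. c i *s (f^^i) v) \<in> h"
    using span_orbit_rep[OF sh k[unfolded U_def]] by blast
  define p where "p = monom 1 k - (\<Sum>i<k. monom (c i) i)"
  have "pev scale p f v = (f^^k) v - (\<Sum>i<k. c i *s (f^^i) v)"
    by (simp add: p_def pev_diff[OF f] pev_monom[OF f] pev_sum[OF f])
  moreover have "coeff p k = 1" by (simp add: p_def coeff_diff coeff_sum coeff_monom)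
  then have "p \<noteq> 0" by auto
  ultimately show ?thesis using c by auto
qed

lemma factor_induct:
  assumes sh: "subspace h" and sV: "subspace V" and f: "lmap scale f" and fV: "\<And>x. x \<in> V \<Longrightarrow> f x \<in> V"
    and fac: "\<And>p::'a poly. degree p > 0 \<Longrightarrow> \<exists>q r. p = q * r \<and> degree q > 0 \<and> P q"
  shows "v \<in> V \<Longrightarrow> v \<notin> h \<Longrightarrow> p \<noteq> 0 \<Longrightarrow> pev scale p f v \<in> h \<Longrightarrow> \<exists>q w. P q \<and> w \<in> V \<and> w \<notin> h \<and> pev scale q f w \<in> h"
proof (induction "degree p" arbitrary: p v rule: less_induct)
  case less
  show ?case
  proof (cases "degree p = 0")
    case True
    then obtain c where pc: "p = [:c:]" by (metis degree_eq_zeroE)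
    with less.prems have "c \<noteq> 0" "c *s v \<in> h" by (auto simp: pev_const[OF f])
    then have "v \<in> h" using subspace_scale[OF sh, of "c *s v" "inverse c"] by simp
    with less.prems show ?thesis by blast
  next
    case False
    then obtain q r where qr: "p = q * r" "degree q > 0" "P q" using fac by blast
    have r0: "r \<noteq> 0" "q \<noteq> 0" using qr less.prems by auto
    show ?thesis
    proof (cases "pev scale r f v \<in> h")
      case True
      have "degree r < degree p" using qr r0 by (simp add: degree_mult_eq)
      then show ?thesis using less.hyps less.prems(1,2) r0(1) True by blast
    next
      case False
      have "pev scale r f v \<in> V" by (rule pev_subspace[OF f sV fV less.prems(1)])
      moreover have "pev scale q f (pev scale r f v) \<in> h" using less.prems(4) qr(1) pev_mult[OF f] by simp
      ultimately show ?thesis using False qr(3) by blast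
    qed
  qed
qed

end

lemma complex_fac:
  fixes p :: "complex poly"
  assumes "degree p > 0"
  shows "\<exists>q r. p = q * r \<and> degree q > 0 \<and> (\<exists>l. q = [:-l, 1:])"
proof -
  have "\<not> constant (poly p)" using assms constant_degree[of p] by simp
  then obtain z where "poly p z = 0" using fundamental_theorem_of_algebra by blast
  then have "[:-z, 1:] dvd p" by (simp add: poly_eq_0_iff_dvd)
  then obtain r where "p = [:-z, 1:] * r" by (elim dvdE)
  then show ?thesis by (intro exI[of _ "[:-z, 1:]"] exI[of _ r]) auto
qed

definition E :: "real poly \<Rightarrow> complex \<Rightarrow> complex" where
  "E p z = poly (map_poly complex_of_real p) z"

lemma E_0[simp]: "E 0 z = 0" by (simp add: E_def)

lemma E_pCons: "E (pCons a p) z = of_real a + z * E p z"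
  by (simp add: E_def map_poly_pCons)

lemma E_add: "E (p + q) z = E p z + E q z"
proof (induction p arbitrary: q)
  case (pCons a p)
  then show ?case by (cases q) (simp add: E_pCons algebra_simps)
qed simp

lemma E_smult: "E (smult c p) z = of_real c * E p z"
  by (induction p) (simp_all add: E_pCons algebra_simps)

lemma E_mult: "E (p * q) z = E p z * E q z"
  by (induction p) (simp_all add: E_pCons E_add E_smult algebra_simps)

lemma E_real: "E p (of_real x) = of_real (poly p x)"
  by (induction p) (simp_all add: E_pCons)

lemma real_fac:
  fixes p :: "real poly"
  assumes dp: "degree p > 0"
  shows "\<exists>q r. p = q * r \<and> degree q > 0 \<and> ((\<exists>l. q = [:-l, 1:]) \<or> (\<exists>a c. q = [:c, a, 1:] \<and> a^2 < 4*c))"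
proof -
  have "degree (map_poly complex_of_real p) = degree p" by (rule degree_map_poly) simp
  then have "\<not> constant (poly (map_poly complex_of_real p))" using dp constant_degree[of "map_poly complex_of_real p"] by simp
  then obtain z where z: "E p z = 0" using fundamental_theorem_of_algebra unfolding E_def by blast
  show ?thesis
  proof (cases "Im z = 0")
    case True
    then have "z = of_real (Re z)" by (simp add: complex_eq_iff)
    then have "poly p (Re z) = 0" using z E_real[of p "Re z"] by simp
    then have "[:-Re z, 1:] dvd p" by (simp add: poly_eq_0_iff_dvd)
    then obtain r where "p = [:-Re z, 1:] * r" by (elim dvdE)
    then show ?thesis by (intro exI[of _ "[:-Re z, 1:]"] exI[of _ r]) auto
  next
    case False
    define Q where "Q = [:Re z ^ 2 + Im z ^ 2, -2 * Re z, 1:]"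
    have Q0: "Q \<noteq> 0" unfolding Q_def by simp
    have EQ: "E Q z = 0"
      unfolding Q_def by (simp add: E_pCons complex_eq_iff power2_eq_square algebra_simps)
    define s where "s = p div Q"
    define r where "r = p mod Q"
    have psr: "p = s * Q + r" unfolding s_def r_def by simp
    have "E r z = 0" using z EQ psr E_add[of "s * Q" r z] E_mult[of s Q z] by simp
    have "r = 0"
    proof (rule ccontr)
      assume "r \<noteq> 0"
      have "degree Q = 2" unfolding Q_def by simp
      then have "degree r < 2" using degree_mod_less'[OF Q0, of p] \<open>r \<noteq> 0\<close> unfolding r_def by simp
      then have rr: "r = [:coeff r 0, coeff r 1:]"
        by (intro poly_eqI) (auto simp: coeff_pCons coeff_eq_0 split: nat.splits)
      have "E r z = of_real (coeff r 0) + z * of_real (coeff r 1)"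
        by (subst rr) (simp add: E_pCons)
      then have "of_real (coeff r 0) + z * of_real (coeff r 1) = 0" using \<open>E r z = 0\<close> by simp
      then have "coeff r 0 + Re z * coeff r 1 = 0" "Im z * coeff r 1 = 0"
        by (simp_all add: complex_eq_iff)
      then have "coeff r 1 = 0" "coeff r 0 = 0" using False by auto
      then have "r = 0" using rr by simp
      with \<open>r \<noteq> 0\<close> show False by simp
    qed
    then have "p = Q * s" using psr by (simp add: mult.commute)
    moreover have "(-2 * Re z)^2 < 4 * (Re z ^ 2 + Im z ^ 2)" using False by (auto simp add: power2_eq_square zero_less_mult_iff linorder_neq_iff)
    ultimately show ?thesis unfolding Q_def by (intro exI[of _ Q] exI[of _ s]) (auto simp: Q_def)
  qed
qed

context lie_fd begin

lemma ad_lmap: "lmap scale (br x)" unfolding lmap_def by (simp add: br_addR br_scaleR)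

lemma ad_commute:
  assumes "br x' x = 0" shows "br x' (br x u) = br x (br x' u)"
  using br_deriv[of x' x u] assms by simp

lemma sub_of_max: "maxsub h \<Longrightarrow> subspace h" unfolding maxsub_def subalg_def by blast
lemma br_h: "maxsub h \<Longrightarrow> x \<in> h \<Longrightarrow> u \<in> h \<Longrightarrow> br x u \<in> h" unfolding maxsub_def subalg_def by blast

definition "hinv h V \<longleftrightarrow> (\<forall>x\<in>h. \<forall>u\<in>V. br x u \<in> V)"

lemma min_inv:
  assumes mh: "maxsub h"
  shows "\<exists>V. subspace V \<and> h \<subseteq> V \<and> V \<noteq> h \<and> hinv h V \<and>
     (\<forall>W. subspace W \<and> h \<subseteq> W \<and> W \<subseteq> V \<and> hinv h W \<longrightarrow> W = h \<or> W = V)"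
proof -
  define Ss where "Ss = {V. subspace V \<and> h \<subseteq> V \<and> V \<noteq> h \<and> hinv h V}"
  have "UNIV \<in> Ss" using mh unfolding Ss_def maxsub_def hinv_def by auto
  then have "\<exists>V. V \<in> Ss \<and> (\<forall>W. W \<in> Ss \<longrightarrow> dim V \<le> dim W)"
    using arg_min_nat_lemma[of "\<lambda>V. V \<in> Ss" UNIV dim] by blast
  then obtain V where V: "V \<in> Ss" "\<And>W. W \<in> Ss \<Longrightarrow> dim V \<le> dim W" by blast
  have "W = h \<or> W = V" if W: "subspace W" "h \<subseteq> W" "W \<subseteq> V" "hinv h W" for W
  proof (rule ccontr)
    assume "\<not> (W = h \<or> W = V)"
    then have "W \<in> Ss" "W \<subset> V" using W unfolding Ss_def by auto
    moreover have "span W = W" "span V = V" using W V(1) unfolding Ss_def by auto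
    ultimately have "dim W < dim V" using dim_psubset[of W V] by metis
    with V(2)[OF \<open>W \<in> Ss\<close>] show False by simp
  qed
  then show ?thesis using V(1) unfolding Ss_def by blast
qed

lemma rel_all:
  assumes mh: "maxsub h" and ab: "\<And>a b. a \<in> h \<Longrightarrow> b \<in> h \<Longrightarrow> br a b = 0"
    and sV: "subspace V" and hV: "h \<subseteq> V" and y: "y \<in> V" "y \<notin> h" and iV: "hinv h V"
    and minV: "\<And>W. subspace W \<Longrightarrow> h \<subseteq> W \<Longrightarrow> W \<subseteq> V \<Longrightarrow> hinv h W \<Longrightarrow> W = h \<or> W = V"
    and x: "x \<in> h"
    and fac: "\<And>p::'k poly. degree p > 0 \<Longrightarrow> \<exists>q r. p = q * r \<and> degree q > 0 \<and> P q"
  shows "\<exists>q. P q \<and> (\<forall>u\<in>V. pev scale q (br x) u \<in> h)"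
proof -
  have sh: "subspace h" using sub_of_max[OF mh] .
  have fV: "br x u \<in> V" if "u \<in> V" for u using iV x that unfolding hinv_def by blast
  obtain p where p: "p \<noteq> 0" "pev scale p (br x) y \<in> h" using orbit_poly[OF sh ad_lmap y(2)] by blast
  obtain q w where qw: "P q" "w \<in> V" "w \<notin> h" "pev scale q (br x) w \<in> h"
    using factor_induct[OF sh sV ad_lmap fV fac y p] by blast
  define W where "W = {u \<in> V. pev scale q (br x) u \<in> h}"
  have lq: "lmap scale (pev scale q (br x))" by (rule pev_lin[OF ad_lmap])
  have "subspace W"
  proof -
    have "0 \<in> W" using subspace_0[OF sV] subspace_0[OF sh] lmap_0[OF lq] unfolding W_def by simp
    moreover have "a + b \<in> W" if "a \<in> W" "b \<in> W" for a b
      using that subspace_add[OF sV] subspace_add[OF sh] lmap_add[OF lq] unfolding W_def by simp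
    moreover have "c *s a \<in> W" if "a \<in> W" for c a
      using that subspace_scale[OF sV] subspace_scale[OF sh] lmap_scale[OF lq] unfolding W_def by simp
    ultimately show ?thesis unfolding subspace_def by blast
  qed
  moreover have "h \<subseteq> W"
  proof
    fix u assume u: "u \<in> h"
    have "pev scale q (br x) u \<in> h" by (rule pev_subspace[OF ad_lmap sh br_h[OF mh x] u])
    then show "u \<in> W" unfolding W_def using hV u by blast
  qed
  moreover have "W \<subseteq> V" unfolding W_def by blast
  moreover have "hinv h W" unfolding hinv_def W_def
  proof (intro ballI CollectI conjI)
    fix x' u assume x': "x' \<in> h" and u0: "u \<in> {u \<in> V. pev scale q (br x) u \<in> h}"
    have u: "u \<in> V" "pev scale q (br x) u \<in> h" using u0 by simp_all
    show "br x' u \<in> V" using iV x' u(1) unfolding hinv_def by blast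
    have "br x' (pev scale q (br x) u) = pev scale q (br x) (br x' u)"
    proof (rule pev_commute[of "br x" "br x'" q u])
      show "lmap (*s) (br x)" "lmap (*s) (br x')" by (rule ad_lmap)+
      show "br x' (br x a) = br x (br x' a)" for a by (rule ad_commute) (rule ab[OF x' x])
    qed
    moreover have "br x' (pev scale q (br x) u) \<in> h" using br_h[OF mh x' u(2)] .
    ultimately show "pev scale q (br x) (br x' u) \<in> h" by simp
  qed
  ultimately have "W = h \<or> W = V" using minV by blast
  moreover have "w \<in> W" using qw unfolding W_def by blast
  ultimately have "W = V" using qw(3) by blast
  then show ?thesis using qw(1) unfolding W_def by blast
qed

lemma line_case:
  assumes mh: "maxsub h" and ab: "\<And>a b. a \<in> h \<Longrightarrow> b \<in> h \<Longrightarrow> br a b = 0"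
    and fac: "\<And>p::'k poly. degree p > 0 \<Longrightarrow> \<exists>q r. p = q * r \<and> degree q > 0 \<and> (\<exists>l. q = [:-l, 1:])"
  shows False
proof -
  obtain V where V: "subspace V" "h \<subseteq> V" "V \<noteq> h" "hinv h V"
    and minV0: "\<forall>W. subspace W \<and> h \<subseteq> W \<and> W \<subseteq> V \<and> hinv h W \<longrightarrow> W = h \<or> W = V"
    using min_inv[OF mh] by blast
  have minV: "\<And>W. subspace W \<Longrightarrow> h \<subseteq> W \<Longrightarrow> W \<subseteq> V \<Longrightarrow> hinv h W \<Longrightarrow> W = h \<or> W = V"
    using minV0 by blast
  obtain y where y: "y \<in> V" "y \<notin> h" using V(2,3) by blast
  show False
  proof (rule line_lemma[OF mh ab y(2)])
    fix x assume x: "x \<in> h"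
    obtain q where q: "\<exists>l. q = [:-l, 1:]" "\<forall>u\<in>V. pev scale q (br x) u \<in> h"
      using rel_all[where P="\<lambda>q. \<exists>l. q = [:-l, 1:]", OF mh ab V(1,2) y V(4) minV x fac] by blast
    then obtain l where "q = [:-l, 1:]" by blast
    then have "pev scale [:-l, 1:] (br x) y \<in> h" using q(2) y(1) by simp
    then have "(- l) *s y + br x y \<in> h" by (simp only: pev_lin1[OF ad_lmap])
    then have "(- l) *s y + br x y \<in> span (insert y h)"
      using span_superset[of "insert y h"] by blast
    moreover have "l *s y \<in> span (insert y h)" by (simp add: span_base span_scale)
    ultimately have "(- l) *s y + br x y + l *s y \<in> span (insert y h)" by (rule span_add)
    then show "br x y \<in> span (insert y h)" by simp
  qed
qed

end

context vector_space begin
lemma pev_deg1: "lmap scale f \<Longrightarrow> pev scale [:c, d:] f v = c *s v + d *s f v"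
  by (simp add: pev_pCons lmap_0 lmap_scale)
lemma sub_scale_inv: "subspace S \<Longrightarrow> c \<noteq> 0 \<Longrightarrow> c *s u \<in> S \<Longrightarrow> u \<in> S"
  using subspace_scale[of S "c *s u" "inverse c"] by simp
end

lemma quad_poly_id:
  fixes a c s :: real
  assumes s: "s > 0" "s^2 = 4*c - a^2"
  shows "[:a/s, 2/s:] * [:a/s, 2/s:] + [:1:] = smult (4 / s^2) [:c, a, 1:]"
proof -
  have s0: "s \<noteq> 0" using s by simp
  have "a/s * (a/s) + 1 = 4 / s^2 * c" using s s0 by (simp add: field_simps power2_eq_square)
  moreover have "a/s * (2/s) + 2/s * (a/s) = 4 / s^2 * a" using s0 by (simp add: field_simps power2_eq_square)
  moreover have "2/s * (2/s) = 4 / s^2" using s0 by (simp add: field_simps power2_eq_square)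
  ultimately show ?thesis by simp
qed

locale lie_real = lie_fd scale Basis br
  for scale :: "real \<Rightarrow> 'v::ab_group_add \<Rightarrow> 'v" (infixr \<open>*s\<close> 75) and Basis :: "'v set" and br :: "'v \<Rightarrow> 'v \<Rightarrow> 'v"
begin

lemma JJ:
  assumes sV: "subspace V" and sh: "subspace h" and f: "lmap scale f" and fV: "\<And>u. u \<in> V \<Longrightarrow> f u \<in> V"
    and q: "a^2 < 4*c" "\<forall>u\<in>V. c *s u + f (a *s u + f u) \<in> h"
  defines "s \<equiv> sqrt (4*c - a^2)"
  shows "s > 0" "\<And>u. u \<in> V \<Longrightarrow> pev scale [:a/s, 2/s:] f (pev scale [:a/s, 2/s:] f u) + u \<in> h"
proof -
  show s0: "s > 0" unfolding s_def using q(1) by simp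
  have s2: "s^2 = 4*c - a^2" unfolding s_def using q(1) by simp
  fix u assume u: "u \<in> V"
  have "pev scale [:a/s, 2/s:] f (pev scale [:a/s, 2/s:] f u) + u
      = pev scale ([:a/s, 2/s:] * [:a/s, 2/s:] + [:1:]) f u"
    by (simp only: pev_add[OF f] pev_mult[OF f] pev_const[OF f] scale_one)
  also have "\<dots> = (4 / s^2) *s pev scale [:c, a, 1:] f u"
    by (simp only: quad_poly_id[OF s0 s2] pev_smult[OF f])
  also have "\<dots> \<in> h" using q(2) u by (simp add: pev_lin2[OF f] subspace_scale[OF sh])
  finally show "pev scale [:a/s, 2/s:] f (pev scale [:a/s, 2/s:] f u) + u \<in> h" .
qed

lemma real_case:
  assumes mh: "maxsub h" and ab: "\<And>a b. a \<in> h \<Longrightarrow> b \<in> h \<Longrightarrow> br a b = 0"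
  shows "dim (UNIV::'v set) \<le> 3"
proof -
  have sh: "subspace h" using sub_of_max[OF mh] .
  obtain V where V: "subspace V" "h \<subseteq> V" "V \<noteq> h" "hinv h V"
    and minV0: "\<forall>W. subspace W \<and> h \<subseteq> W \<and> W \<subseteq> V \<and> hinv h W \<longrightarrow> W = h \<or> W = V"
    using min_inv[OF mh] by blast
  have minV: "\<And>W. subspace W \<Longrightarrow> h \<subseteq> W \<Longrightarrow> W \<subseteq> V \<Longrightarrow> hinv h W \<Longrightarrow> W = h \<or> W = V"
    using minV0 by blast
  obtain y where y: "y \<in> V" "y \<notin> h" using V(2,3) by blast
  have adV: "br x u \<in> V" if "x \<in> h" "u \<in> V" for x u using V(4) that unfolding hinv_def by blast
  define Pq where "Pq q \<longleftrightarrow> (\<exists>l. q = [:-l, 1:]) \<or> (\<exists>a c. q = [:c, a, 1:] \<and> a^2 < 4*c)" for q :: "real poly"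
  have fac: "\<exists>q r. p = q * r \<and> degree q > 0 \<and> Pq q" if "degree p > 0" for p :: "real poly"
    using real_fac[OF that] unfolding Pq_def .
  have loq: "(\<exists>l. \<forall>u\<in>V. (- l) *s u + br x u \<in> h) \<or>
      (\<exists>a c. a^2 < 4*c \<and> (\<forall>u\<in>V. c *s u + br x (a *s u + br x u) \<in> h))" if x: "x \<in> h" for x
  proof -
    obtain q where q: "Pq q" "\<forall>u\<in>V. pev scale q (br x) u \<in> h"
      using rel_all[where P=Pq, OF mh ab V(1,2) y V(4) minV x fac] by blast
    show ?thesis
    proof (cases "\<exists>l. q = [:-l, 1:]")
      case True
      then obtain l where "q = [:-l, 1:]" by blast
      then have "\<forall>u\<in>V. (- l) *s u + br x u \<in> h" using q(2) by (simp add: pev_lin1[OF ad_lmap])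
      then show ?thesis by blast
    next
      case False
      then obtain a c where "q = [:c, a, 1:]" "a^2 < 4*c" using q(1) unfolding Pq_def by blast
      then have "\<forall>u\<in>V. c *s u + br x (a *s u + br x u) \<in> h" using q(2) by (simp add: pev_lin2[OF ad_lmap])
      then show ?thesis using \<open>a^2 < 4*c\<close> by blast
    qed
  qed
  show ?thesis
  proof (cases "\<forall>x\<in>h. \<exists>l. \<forall>u\<in>V. (- l) *s u + br x u \<in> h")
    case True
    have False
    proof (rule line_lemma[OF mh ab y(2)])
      fix x assume x: "x \<in> h"
      obtain l where "\<forall>u\<in>V. (- l) *s u + br x u \<in> h" using True x by blast
      then have "(- l) *s y + br x y \<in> h" using y(1) by blast
      then have "(- l) *s y + br x y \<in> span (insert y h)"
        using span_superset[of "insert y h"] by blast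
      moreover have "l *s y \<in> span (insert y h)" by (simp add: span_base span_scale)
      ultimately have "(- l) *s y + br x y + l *s y \<in> span (insert y h)" by (rule span_add)
      then show "br x y \<in> span (insert y h)" by simp
    qed
    then show ?thesis ..
  next
    case False
    then obtain x0 where x0: "x0 \<in> h" and nl: "\<not> (\<exists>l. \<forall>u\<in>V. (- l) *s u + br x0 u \<in> h)" by blast
    then obtain a0 c0 where q0: "a0^2 < 4*c0" "\<forall>u\<in>V. c0 *s u + br x0 (a0 *s u + br x0 u) \<in> h"
      using loq[OF x0] by blast
    define f0 where "f0 = br x0"
    have f0l: "lmap scale f0" unfolding f0_def by (rule ad_lmap)
    have f0V: "f0 u \<in> V" if "u \<in> V" for u unfolding f0_def using adV[OF x0 that] .
    have f0h: "f0 u = 0" if "u \<in> h" for u unfolding f0_def using ab[OF x0 that] .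
    define s0 where "s0 = sqrt (4*c0 - a0^2)"
    define J where "J = pev scale [:a0/s0, 2/s0:] f0"
    have s0p: "s0 > 0" and JJ0: "\<And>u. u \<in> V \<Longrightarrow> J (J u) + u \<in> h"
      using JJ[OF V(1) sh f0l f0V q0[unfolded f0_def[symmetric]]] unfolding J_def s0_def by blast+
    have Jl: "lmap scale J" unfolding J_def by (rule pev_lin[OF f0l])
    have Jy: "J y = (a0/s0) *s y + (2/s0) *s f0 y" unfolding J_def by (rule pev_deg1[OF f0l])
    define V' where "V' = span (insert y (insert (f0 y) h))"
    have yV': "y \<in> V'" and f0yV': "f0 y \<in> V'" and hV': "h \<subseteq> V'" unfolding V'_def
      using span_superset[of "insert y (insert (f0 y) h)"] by blast+
    have sV': "subspace V'" unfolding V'_def by simp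
    have JyV': "J y \<in> V'" unfolding Jy using yV' f0yV' sV' by (simp add: subspace_add subspace_scale)
    have Jcomm: "br x (J u) = J (br x u)" if "x \<in> h" for x u unfolding J_def
      by (rule pev_commute[OF f0l ad_lmap]) (unfold f0_def, rule ad_commute, rule ab[OF that x0])
    have JV: "J u \<in> V" if "u \<in> V" for u unfolding J_def by (rule pev_subspace[OF f0l V(1) f0V that])
    have Jh: "J u \<in> h" if "u \<in> h" for u unfolding J_def
      by (rule pev_subspace[OF f0l sh _ that]) (simp add: f0h subspace_0[OF sh])
    have brV': "br x y \<in> V'" if x: "x \<in> h" for x
    proof -
      show ?thesis
      proof (cases "\<exists>l. \<forall>u\<in>V. (- l) *s u + br x u \<in> h")
        case True
        then obtain l where "(- l) *s y + br x y \<in> h" using y(1) by blast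
        then have "(- l) *s y + br x y \<in> V'" using hV' by blast
        moreover have "l *s y \<in> V'" using yV' sV' by (simp add: subspace_scale)
        ultimately have "(- l) *s y + br x y + l *s y \<in> V'" by (rule subspace_add[OF sV'])
        then show ?thesis by simp
      next
        case False
        then obtain a c where q: "a^2 < 4*c" "\<forall>u\<in>V. c *s u + br x (a *s u + br x u) \<in> h"
          using loq[OF x] by blast
        define s where "s = sqrt (4*c - a^2)"
        define G where "G = pev scale [:a/s, 2/s:] (br x)"
        have sp: "s > 0" and GG: "\<And>u. u \<in> V \<Longrightarrow> G (G u) + u \<in> h"
          using JJ[OF V(1) sh ad_lmap adV[OF x] q] unfolding G_def s_def by blast+
        have Gl: "lmap scale G" unfolding G_def by (rule pev_lin[OF ad_lmap])
        have Gy: "G y = (a/s) *s y + (2/s) *s br x y" unfolding G_def by (rule pev_deg1[OF ad_lmap])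
        have Gcomm: "br x' (G u) = G (br x' u)" if "x' \<in> h" for x' u unfolding G_def
          by (rule pev_commute[OF ad_lmap ad_lmap]) (rule ad_commute, rule ab[OF that x])
        have GV: "G u \<in> V" if "u \<in> V" for u unfolding G_def by (rule pev_subspace[OF ad_lmap V(1) adV[OF x] that])
        have Gh: "G u \<in> h" if "u \<in> h" for u unfolding G_def
          by (rule pev_subspace[OF ad_lmap sh _ that]) (rule br_h[OF mh x])
        have f0G: "f0 (G u) = G (f0 u)" for u unfolding f0_def using Gcomm[OF x0] .
        have JG: "J (G u) = G (J u)" for u
        proof -
          have "G (J u) = J (G u)" unfolding J_def by (rule pev_commute[OF f0l Gl]) (simp add: f0G)
          then show ?thesis by simp
        qed
        define W where "W = {u \<in> V. G u - J u \<in> h}"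
        have "subspace W"
        proof -
          have "0 \<in> W" using subspace_0[OF V(1)] subspace_0[OF sh] lmap_0[OF Gl] lmap_0[OF Jl]
            unfolding W_def by simp
          moreover have "u + v \<in> W" if "u \<in> W" "v \<in> W" for u v
          proof -
            have "G (u + v) - J (u + v) = (G u - J u) + (G v - J v)"
              by (simp add: lmap_add[OF Gl] lmap_add[OF Jl] algebra_simps)
            then show ?thesis using that subspace_add[OF V(1)] subspace_add[OF sh] unfolding W_def by simp
          qed
          moreover have "r *s u \<in> W" if "u \<in> W" for r u
          proof -
            have "G (r *s u) - J (r *s u) = r *s (G u - J u)"
              by (simp add: lmap_scale[OF Gl] lmap_scale[OF Jl] scale_right_diff_distrib)
            then show ?thesis using that subspace_scale[OF V(1)] subspace_scale[OF sh] unfolding W_def by simp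
          qed
          ultimately show ?thesis unfolding subspace_def by blast
        qed
        moreover have "h \<subseteq> W"
        proof
          fix u assume u: "u \<in> h"
          have "G u - J u \<in> h" using Gh[OF u] Jh[OF u] subspace_diff[OF sh] by blast
          then show "u \<in> W" unfolding W_def using V(2) u by blast
        qed
        moreover have "W \<subseteq> V" unfolding W_def by blast
        moreover have "hinv h W" unfolding hinv_def
        proof (intro ballI)
          fix x' u assume x': "x' \<in> h" and u0: "u \<in> W"
          have u: "u \<in> V" "G u - J u \<in> h" using u0 unfolding W_def by simp_all
          have "G (br x' u) - J (br x' u) = br x' (G u - J u)"
            by (simp add: Gcomm[OF x'] Jcomm[OF x'] br_diffR)
          moreover have "br x' (G u - J u) \<in> h" by (rule br_h[OF mh x' u(2)])
          ultimately show "br x' u \<in> W" unfolding W_def using adV[OF x' u(1)] by simp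
        qed
        ultimately have "W = h \<or> W = V" using minV by blast
        then obtain \<sigma> :: real where sig: "G y - \<sigma> *s J y \<in> h"
        proof
          assume "W = V"
          then have "G y - J y \<in> h" using y(1) unfolding W_def by blast
          then show ?thesis using that[of 1] by simp
        next
          assume Wh: "W = h"
          define u where "u = G y + J y"
          have uV: "u \<in> V" unfolding u_def using GV[OF y(1)] JV[OF y(1)] subspace_add[OF V(1)] by blast
          have "G u - J u = (G (G y) + y) - (J (J y) + y)"
            unfolding u_def by (simp add: lmap_add[OF Gl] lmap_add[OF Jl] JG algebra_simps)
          moreover have "(G (G y) + y) - (J (J y) + y) \<in> h"
            by (rule subspace_diff[OF sh GG[OF y(1)] JJ0[OF y(1)]])
          ultimately have "G u - J u \<in> h" by (simp only:)
          then have "u \<in> h" using uV Wh unfolding W_def by blast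
          then show ?thesis using that[of "-1"] unfolding u_def by simp
        qed
        have "G y \<in> V'"
        proof -
          have "G y - \<sigma> *s J y \<in> V'" using sig hV' by blast
          moreover have "\<sigma> *s J y \<in> V'" using JyV' sV' by (simp add: subspace_scale)
          ultimately have "G y - \<sigma> *s J y + \<sigma> *s J y \<in> V'" by (rule subspace_add[OF sV'])
          then show ?thesis by simp
        qed
        then have "(s/2) *s (G y - (a/s) *s y) \<in> V'" using yV' sV'
          by (simp add: subspace_scale subspace_diff)
        moreover have "(s/2) *s (G y - (a/s) *s y) = br x y"
          using sp by (simp add: Gy)
        ultimately show ?thesis by simp
      qed
    qed
    have f0f0: "f0 (f0 y) \<in> V'"
    proof -
      have "c0 *s y + f0 (a0 *s y + f0 y) \<in> h" using q0(2) y(1) unfolding f0_def by blast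
      then have "c0 *s y + f0 (a0 *s y + f0 y) \<in> V'" using hV' by blast
      moreover have "c0 *s y + f0 (a0 *s y + f0 y) = c0 *s y + a0 *s f0 y + f0 (f0 y)"
        by (simp add: lmap_add[OF f0l] lmap_scale[OF f0l] add.assoc)
      ultimately have "c0 *s y + a0 *s f0 y + f0 (f0 y) \<in> V'" by simp
      moreover have "c0 *s y + a0 *s f0 y \<in> V'" using yV' f0yV' sV' by (simp add: subspace_add subspace_scale)
      ultimately have "c0 *s y + a0 *s f0 y + f0 (f0 y) - (c0 *s y + a0 *s f0 y) \<in> V'"
        by (rule subspace_diff[OF sV'])
      then show ?thesis by simp
    qed
    have pre: "V' \<subseteq> {u. f0 u \<in> U}" if U: "subspace U" "f0 y \<in> U" "f0 (f0 y) \<in> U" for U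
      unfolding V'_def
    proof (rule span_minimal)
      show "insert y (insert (f0 y) h) \<subseteq> {u. f0 u \<in> U}" using U f0h subspace_0[OF U(1)] by auto
      show "subspace {u. f0 u \<in> U}" unfolding subspace_def
        using U(1) lmap_0[OF f0l] lmap_add[OF f0l] lmap_scale[OF f0l]
        by (simp add: subspace_0 subspace_add subspace_scale)
    qed
    have f0V': "f0 u \<in> V'" if "u \<in> V'" for u using pre[OF sV' f0yV' f0f0] that by blast
    define w1 where "w1 = f0 y"
    define w2 where "w2 = f0 (f0 y)"
    have f0m: "f0 u \<in> span {w1, w2}" if "u \<in> V'" for u
      using pre[of "span {w1, w2}"] that unfolding w1_def w2_def by (auto simp: span_base)
    have brV'2: "br x (f0 y) \<in> V'" if x: "x \<in> h" for x
    proof -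
      have "br x (f0 y) = f0 (br x y)" unfolding f0_def by (rule ad_commute) (rule ab[OF x x0])
      then show ?thesis using f0V'[OF brV'[OF x]] by simp
    qed
    have w1h: "w1 \<notin> h"
    proof
      assume w: "w1 \<in> h"
      have "c0 *s y + f0 (a0 *s y + f0 y) \<in> h" using q0(2) y(1) unfolding f0_def by blast
      moreover have "c0 *s y + f0 (a0 *s y + f0 y) = c0 *s y + a0 *s f0 y"
        using f0h[OF w[unfolded w1_def]] by (simp add: lmap_add[OF f0l] lmap_scale[OF f0l])
      moreover have "a0 *s f0 y \<in> h" using w unfolding w1_def by (simp add: subspace_scale[OF sh])
      ultimately have "c0 *s y + a0 *s f0 y - a0 *s f0 y \<in> h" using subspace_diff[OF sh] by metis
      then have "c0 *s y \<in> h" by simp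
      moreover have "c0 \<noteq> 0" using q0(1) by (smt (verit) zero_le_power2)
      ultimately have "y \<in> h" using sub_scale_inv[OF sh] by blast
      with y(2) show False by simp
    qed
    show ?thesis
    proof (rule plane_lemma[OF mh ab w1h])
      fix x assume x: "x \<in> h"
      have "br x w1 = f0 (br x y)" unfolding w1_def f0_def by (rule ad_commute) (rule ab[OF x x0])
      moreover have "br x w2 = f0 (br x (f0 y))" unfolding w2_def f0_def by (rule ad_commute) (rule ab[OF x x0])
      ultimately show "br x w1 \<in> span {w1, w2} \<and> br x w2 \<in> span {w1, w2}"
        using f0m[OF brV'[OF x]] f0m[OF brV'2[OF x]] by simp
    qed
  qed
qed

end

context lie_fd begin

lemma final_generic:
  assumes H: "maximal_subalgebra scale br H"
    and no_ab: "\<And>h. maxsub h \<Longrightarrow> (\<And>a b. a \<in> h \<Longrightarrow> b \<in> h \<Longrightarrow> br a b = 0) \<Longrightarrow> False"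
  shows "maximal_lie_triple_subsystem scale br H"
proof -
  have mh: "maxsub H" using H unfolding maximal_subalgebra_def lie_subalgebra_def maxsub_def subalg_def .
  have sH: "subspace H" using sub_of_max[OF mh] .
  have "lie_triple_subsystem scale br H"
    unfolding lie_triple_subsystem_def using sH br_h[OF mh] by blast
  moreover have "H \<noteq> UNIV" using mh unfolding maxsub_def by blast
  moreover have "S = H" if S: "lie_triple_subsystem scale br S" "H \<subseteq> S" "S \<noteq> UNIV" for S
  proof (rule ccontr)
    assume "S \<noteq> H"
    have "lts S" using S(1) unfolding lie_triple_subsystem_def lts_def .
    then have "\<And>a b. a \<in> H \<Longrightarrow> b \<in> H \<Longrightarrow> br a b = 0"
      using lts_abelian[OF mh _ S(2,3) \<open>S \<noteq> H\<close>] by blast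
    then show False using no_ab[OF mh] by blast
  qed
  ultimately show ?thesis unfolding maximal_lie_triple_subsystem_def by blast
qed

end

lemma get_lie_fd:
  assumes "simple_lie_algebra scale br" "finite_dim scale"
  shows "\<exists>A. lie_fd scale A br"
proof -
  have la: "lie_algebra scale br" using assms(1) unfolding simple_lie_algebra_def by blast
  then have vs: "vector_space scale" unfolding lie_algebra_def by blast
  obtain B where B: "finite B" "module.span scale B = UNIV" using assms(2) unfolding finite_dim_def by blast
  obtain A where A: "A \<subseteq> B" "\<not> module.dependent scale A" "B \<subseteq> module.span scale A"
    using vector_space.maximal_independent_subset[OF vs, of B] by blast
  have "module.span scale A = UNIV"
  proof -
    have m: "module scale" using vs by (simp add: module_iff_vector_space)
    have "module.span scale B \<subseteq> module.span scale A"
      using module.span_mono[OF m A(3)] module.span_span[OF m] by simp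
    then show ?thesis using B(2) by auto
  qed
  then have fd: "finite_dimensional_vector_space scale A"
    using vs A(2) finite_subset[OF A(1) B(1)]
    unfolding finite_dimensional_vector_space_def finite_dimensional_vector_space_axioms_def by blast
  have la': "(\<forall>x y z. br (x + y) z = br x z + br y z) \<and> (\<forall>x y z. br x (y + z) = br x y + br x z) \<and>
     (\<forall>a x y. br (scale a x) y = scale a (br x y)) \<and> (\<forall>a x y. br x (scale a y) = scale a (br x y)) \<and>
     (\<forall>x. br x x = 0) \<and> (\<forall>x y z. br x (br y z) + br y (br z x) + br z (br x y) = 0)"
    using la unfolding lie_algebra_def by blast
  have sa: "\<exists>x y. br x y \<noteq> 0" "\<forall>I. lie_ideal scale br I \<longrightarrow> I = {0} \<or> I = UNIV"
    using assms(1) unfolding simple_lie_algebra_def by blast+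
  have "lie_fd scale A br"
    apply (rule lie_fd.intro[OF fd])
    apply (rule lie_fd_axioms.intro)
    subgoal using la' by blast
    subgoal using la' by blast
    subgoal using la' by blast
    subgoal using la' by blast
    subgoal using la' by blast
    subgoal using la' by blast
    subgoal using sa(1) by blast
    subgoal for I using sa(2) unfolding lie_ideal_def by blast
    done
  then show ?thesis by blast
qed

theorem mainTheorem2:
  shows "(\<forall>(scale :: complex \<Rightarrow> 'a::ab_group_add \<Rightarrow> 'a) br H.
            simple_lie_algebra scale br \<and> finite_dim scale \<and> maximal_subalgebra scale br H
            \<longrightarrow> maximal_lie_triple_subsystem scale br H)
       \<and> (\<forall>(scale :: real \<Rightarrow> 'b::ab_group_add \<Rightarrow> 'b) br H.
            simple_lie_algebra scale br \<and> finite_dim scale \<and> vector_space.dim scale (UNIV :: 'b set) > 3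
            \<and> maximal_subalgebra scale br H
            \<longrightarrow> maximal_lie_triple_subsystem scale br H)"
proof (intro conjI allI impI)
  fix scale :: "complex \<Rightarrow> 'a::ab_group_add \<Rightarrow> 'a" and br H
  assume a: "simple_lie_algebra scale br \<and> finite_dim scale \<and> maximal_subalgebra scale br H"
  then obtain A where "lie_fd scale A br" using get_lie_fd by blast
  then interpret L: lie_fd scale A br .
  show "maximal_lie_triple_subsystem scale br H"
  proof (rule L.final_generic)
    show "maximal_subalgebra scale br H" using a by blast
    fix h assume h: "L.maxsub h" "\<And>a b. a \<in> h \<Longrightarrow> b \<in> h \<Longrightarrow> br a b = 0"
    show False by (rule L.line_case[OF h(1) h(2) complex_fac])
  qed
next
  fix scale :: "real \<Rightarrow> 'b::ab_group_add \<Rightarrow> 'b" and br H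
  assume a: "simple_lie_algebra scale br \<and> finite_dim scale \<and> vector_space.dim scale (UNIV :: 'b set) > 3
            \<and> maximal_subalgebra scale br H"
  then obtain A where "lie_fd scale A br" using get_lie_fd by blast
  then interpret L: lie_real scale A br unfolding lie_real_def .
  show "maximal_lie_triple_subsystem scale br H"
  proof (rule L.final_generic)
    show "maximal_subalgebra scale br H" using a by blast
    fix h assume h: "L.maxsub h" "\<And>a b. a \<in> h \<Longrightarrow> b \<in> h \<Longrightarrow> br a b = 0"
    have "vector_space.dim scale (UNIV :: 'b set) \<le> 3" by (rule L.real_case[OF h(1) h(2)])
    then show False using a by simp
  qed
qed

end
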